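(* Let $u(x,t)$ be a smooth solution of the Rosenau equation $$u_t + u_{xxxxt} + u_x + u u_x = 0,\qquad t>0,$$ which is $L$-periodic in $x$ for some $L>0$. Then the quantity $$\int_0^L \Big(\frac{1}{3}u^3 + u^2\Big)\,\mathrm{d}x$$ is independent of $t$.
   Context: All functions are smooth in $(x,t)$ and $L$-periodic in the spatial variable $x$, so boundary terms from integration by parts over one period vanish. Subscripts denote partial derivatives. *)

theory Defs
  imports "HOL-Analysis.Analysis"
begin

definition Dx :: "(real \<times> real \<Rightarrow> real) \<Rightarrow> real \<times> real \<Rightarrow> real" where
  "Dx f = (\<lambda>p. deriv (\<lambda>y. f (y, snd p)) (fst p))"

definition Dt :: "(real \<times> real \<Rightarrow> real) \<Rightarrow> real \<times> real \<Rightarrow> real" where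
  "Dt f = (\<lambda>p. deriv (\<lambda>s. f (fst p, s)) (snd p))"

text \<open>Iterated partial derivative: True = d/dx, False = d/dt (applied from the head of the list).\<close>
fun Dseq :: "bool list \<Rightarrow> (real \<times> real \<Rightarrow> real) \<Rightarrow> real \<times> real \<Rightarrow> real" where
  "Dseq [] f = f"
| "Dseq (b # bs) f = Dseq bs (if b then Dx f else Dt f)"

definition smooth_on2 :: "(real \<times> real) set \<Rightarrow> (real \<times> real \<Rightarrow> real) \<Rightarrow> bool" where
  "smooth_on2 S f \<longleftrightarrow> (\<forall>ds. Dseq ds f differentiable_on S \<and> continuous_on S (Dseq ds f))"

end

theory Submission
  imports Defs
begin

abbreviation "SS \<equiv> (UNIV \<times> {0<..}) :: (real \<times> real) set"

lemma smooth_Dx: "smooth_on2 S g \<Longrightarrow> smooth_on2 S (Dx g)"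
  unfolding smooth_on2_def by (metis Dseq.simps(2))

lemma smooth_Dt: "smooth_on2 S g \<Longrightarrow> smooth_on2 S (Dt g)"
  unfolding smooth_on2_def by (metis Dseq.simps(2))

lemma smooth_cont: "smooth_on2 S g \<Longrightarrow> continuous_on S g"
  unfolding smooth_on2_def by (metis Dseq.simps(1))

lemma smooth_diff_at:
  assumes "smooth_on2 SS g" "t > 0"
  shows "g differentiable (at (x,t))"
proof -
  have "g differentiable_on SS" using assms(1) unfolding smooth_on2_def by (metis Dseq.simps(1))
  moreover have "open SS" by (simp add: open_Times)
  ultimately show ?thesis using assms(2) by (simp add: differentiable_on_eq_differentiable_at)
qed

lemma partial_x:
  assumes "smooth_on2 SS g" "t > 0"
  shows "((\<lambda>y. g (y,t)) has_real_derivative Dx g (x,t)) (at x)"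
proof -
  have d: "g differentiable (at (x,t))" using smooth_diff_at[OF assms] .
  have "(\<lambda>y::real. (y,t)) differentiable (at x)"
    by (intro derivative_intros)
  hence "(g \<circ> (\<lambda>y. (y,t))) differentiable (at x)"
    using d differentiable_chain_at by fastforce
  hence "(\<lambda>y. g (y,t)) differentiable (at x)" by (simp add: o_def)
  thus ?thesis unfolding Dx_def by (simp add: DERIV_deriv_iff_real_differentiable)
qed

lemma partial_t:
  assumes "smooth_on2 SS g" "t > 0"
  shows "((\<lambda>s. g (x,s)) has_real_derivative Dt g (x,t)) (at t)"
proof -
  have d: "g differentiable (at (x,t))" using smooth_diff_at[OF assms] .
  have "(\<lambda>s::real. (x,s)) differentiable (at t)"
    by (intro derivative_intros)
  hence "(g \<circ> (\<lambda>s. (x,s))) differentiable (at t)"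
    using d differentiable_chain_at by fastforce
  hence "(\<lambda>s. g (x,s)) differentiable (at t)" by (simp add: o_def)
  thus ?thesis unfolding Dt_def by (simp add: DERIV_deriv_iff_real_differentiable)
qed

lemma periodic_Dx:
  assumes g: "smooth_on2 SS g" and p: "\<And>x t. t > 0 \<Longrightarrow> g (x + L, t) = g (x, t)" and t: "t > 0"
  shows "Dx g (x + L, t) = Dx g (x, t)"
proof -
  have "((\<lambda>y. g (y + L, t)) has_real_derivative Dx g (x + L, t)) (at x)"
    using partial_x[OF g t, of "x + L"] by (simp add: DERIV_shift)
  moreover have "(\<lambda>y. g (y + L, t)) = (\<lambda>y. g (y, t))" using p t by auto
  ultimately show ?thesis using partial_x[OF g t, of x] DERIV_unique by metis
qed

lemma periodic_Dt:
  assumes g: "smooth_on2 SS g" and p: "\<And>x t. t > 0 \<Longrightarrow> g (x + L, t) = g (x, t)" and t: "t > 0"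
  shows "Dt g (x + L, t) = Dt g (x, t)"
proof -
  have "((\<lambda>s. g (x + L, s)) has_real_derivative Dt g (x + L, t)) (at t)"
    using partial_t[OF g t, of "x + L"] .
  hence "((\<lambda>s. g (x, s)) has_real_derivative Dt g (x + L, t)) (at t)"
    by (rule has_field_derivative_transform_within_open[where S="{0<..}"]) (use t p in auto)
  thus ?thesis using partial_t[OF g t, of x] DERIV_unique by metis
qed

lemma cont_slice_x:
  assumes "continuous_on SS h" "t > 0"
  shows "continuous_on A (\<lambda>s. h (s, t))"
  by (rule continuous_on_compose2[OF assms(1)]) (use assms(2) in \<open>auto intro!: continuous_intros\<close>)

lemma schwarz:
  assumes g: "smooth_on2 SS g" and t: "t > 0"
  shows "Dx (Dt g) (x, t) = Dt (Dx g) (x, t)"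
proof -
  define a where "a = x - 1"
  define b where "b = x + 1"
  have gx: "smooth_on2 SS (Dx g)" using smooth_Dx[OF g] .
  have gt: "smooth_on2 SS (Dt g)" using smooth_Dt[OF g] .
  have gxt: "smooth_on2 SS (Dt (Dx g))" using smooth_Dt[OF gx] .
  have cx: "continuous_on SS (Dx g)" using smooth_cont[OF gx] .
  have cxt: "continuous_on SS (Dt (Dx g))" using smooth_cont[OF gxt] .
  have ftc: "g (y, t') - g (a, t') = integral {a..y} (\<lambda>s. Dx g (s, t'))"
    if "t' > 0" "a \<le> y" for y t'
  proof -
    have "((\<lambda>s. Dx g (s, t')) has_integral (g (y, t') - g (a, t'))) {a..y}"
      apply (rule fundamental_theorem_of_calculus[OF that(2)])
      using partial_x[OF g that(1)]
      by (simp add: has_real_derivative_iff_has_vector_derivative[symmetric] has_field_derivative_at_within)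
    thus ?thesis by (simp add: integral_unique)
  qed
  have leib: "((\<lambda>t'. integral {a..y} (\<lambda>s. Dx g (s, t'))) has_real_derivative
      integral {a..y} (\<lambda>s. Dt (Dx g) (s, t))) (at t)" if "a \<le> y" for y
  proof -
    have "((\<lambda>t'. integral (cbox a y) (\<lambda>s. Dx g (s, t'))) has_real_derivative
      integral (cbox a y) (\<lambda>s. Dt (Dx g) (s, t))) (at t within {0<..})"
    proof (rule leibniz_rule_field_derivative[where f="\<lambda>t' s. Dx g (s, t')" and fx="\<lambda>t' s. Dt (Dx g) (s, t')"])
      fix t' :: real and s assume "t' \<in> {0<..}" "s \<in> cbox a y"
      thus "((\<lambda>t'. Dx g (s, t')) has_real_derivative Dt (Dx g) (s, t')) (at t' within {0<..})"
        using partial_t[OF gx, of t' s] has_field_derivative_at_within by simp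
    next
      fix t' :: real assume "t' \<in> {0<..}"
      hence "continuous_on {a..y} (\<lambda>s. Dx g (s, t'))" using cont_slice_x[OF cx, of t'] by simp
      thus "(\<lambda>s. Dx g (s, t')) integrable_on cbox a y"
        unfolding cbox_interval by (rule integrable_continuous_interval)
    next
      have "continuous_on ({0<..} \<times> cbox a y) (Dt (Dx g) \<circ> (\<lambda>p. (snd p, fst p)))"
      proof (rule continuous_on_compose)
        show "continuous_on ({0<..} \<times> cbox a y) (\<lambda>p::real\<times>real. (snd p, fst p))"
          by (intro continuous_on_Pair continuous_on_snd continuous_on_fst continuous_on_id)
        show "continuous_on ((\<lambda>p::real\<times>real. (snd p, fst p)) ` ({0<..} \<times> cbox a y)) (Dt (Dx g))"
          by (rule continuous_on_subset[OF cxt]) auto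
      qed
      thus "continuous_on ({0<..} \<times> cbox a y) (\<lambda>(t', s). Dt (Dx g) (s, t'))"
        by (simp add: o_def case_prod_beta)
    next
      show "t \<in> {0<..}" using t by simp
    next
      show "convex ({0<..}::real set)" by (simp add: convex_real_interval)
    qed
    moreover have "at t within {0<..} = at t" using t by (intro at_within_open) auto
    ultimately show ?thesis by (simp only: cbox_interval)
  qed
  have eqDt: "Dt g (y, t) - Dt g (a, t) = integral {a..y} (\<lambda>s. Dt (Dx g) (s, t))" if "a \<le> y" for y
  proof -
    have "((\<lambda>t'. g (y, t') - g (a, t')) has_real_derivative Dt g (y, t) - Dt g (a, t)) (at t)"
      using partial_t[OF g t, of y] partial_t[OF g t, of a] by (rule DERIV_diff)
    hence "((\<lambda>t'. integral {a..y} (\<lambda>s. Dx g (s, t'))) has_real_derivative Dt g (y, t) - Dt g (a, t)) (at t)"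
    proof (rule has_field_derivative_transform_within_open[where S="{0<..}"])
      fix t' :: real assume "t' \<in> {0<..}"
      thus "g (y, t') - g (a, t') = integral {a..y} (\<lambda>s. Dx g (s, t'))" using ftc[of t' y] that by simp
    qed (use t in simp_all)
    thus ?thesis using leib[OF that] DERIV_unique by metis
  qed
  have ch: "continuous_on {a..b} (\<lambda>s. Dt (Dx g) (s, t))" using cont_slice_x[OF cxt t] .
  have "((\<lambda>y. integral {a..y} (\<lambda>s. Dt (Dx g) (s, t))) has_real_derivative Dt (Dx g) (x, t)) (at x within {a..b})"
    by (rule integral_has_real_derivative[OF ch]) (simp add: a_def b_def)
  hence "((\<lambda>y. integral {a..y} (\<lambda>s. Dt (Dx g) (s, t))) has_real_derivative Dt (Dx g) (x, t)) (at x)"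
    by (simp add: at_within_Icc_at a_def b_def)
  hence "((\<lambda>y. Dt g (a, t) + integral {a..y} (\<lambda>s. Dt (Dx g) (s, t))) has_real_derivative 0 + Dt (Dx g) (x, t)) (at x)"
    by (rule DERIV_add[OF DERIV_const])
  hence "((\<lambda>y. Dt g (a, t) + integral {a..y} (\<lambda>s. Dt (Dx g) (s, t))) has_real_derivative Dt (Dx g) (x, t)) (at x)"
    by simp
  hence "((\<lambda>y. Dt g (y, t)) has_real_derivative Dt (Dx g) (x, t)) (at x)"
  proof (rule has_field_derivative_transform_within_open[where S="{a<..<b}"])
    fix y assume "y \<in> {a<..<b}"
    thus "Dt g (a, t) + integral {a..y} (\<lambda>s. Dt (Dx g) (s, t)) = Dt g (y, t)"
      using eqDt[of y] by simp
  qed (simp_all add: a_def b_def)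
  thus ?thesis using partial_x[OF gt t, of x] DERIV_unique by metis
qed

lemma cont_swap:
  assumes "continuous_on SS h"
  shows "continuous_on ({0<..} \<times> A) (\<lambda>(t', s). h (s, t'))"
proof -
  have "continuous_on ({0<..} \<times> A) (h \<circ> (\<lambda>p. (snd p, fst p)))"
  proof (rule continuous_on_compose)
    show "continuous_on ({0<..} \<times> A) (\<lambda>p::real\<times>real. (snd p, fst p))"
      by (intro continuous_on_Pair continuous_on_snd continuous_on_fst continuous_on_id)
    show "continuous_on ((\<lambda>p::real\<times>real. (snd p, fst p)) ` ({0<..} \<times> A)) h"
      by (rule continuous_on_subset[OF assms]) auto
  qed
  thus ?thesis by (simp add: o_def case_prod_beta)
qed

lemma key:
  fixes u :: "real \<times> real \<Rightarrow> real" and L :: real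
  assumes L_pos: "L > 0"
    and smooth: "smooth_on2 SS u"
    and periodic: "\<And>x t. t > 0 \<Longrightarrow> u (x + L, t) = u (x, t)"
    and rosenau: "\<And>x t. t > 0 \<Longrightarrow>
        Dt u (x, t) + Dt (Dx (Dx (Dx (Dx u)))) (x, t) + Dx u (x, t) + u (x, t) * Dx u (x, t) = 0"
    and t: "t > 0"
  shows "integral {0..L} (\<lambda>x. (u (x, t) ^ 2 + 2 * u (x, t)) * Dt u (x, t)) = 0"
proof -
  define u1 where "u1 = Dx u"
  define u2 where "u2 = Dx u1"
  define u3 where "u3 = Dx u2"
  have s1: "smooth_on2 SS u1" unfolding u1_def by (rule smooth_Dx[OF smooth])
  have s2: "smooth_on2 SS u2" unfolding u2_def by (rule smooth_Dx[OF s1])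
  have s3: "smooth_on2 SS u3" unfolding u3_def by (rule smooth_Dx[OF s2])
  have p1: "\<And>x t. t > 0 \<Longrightarrow> u1 (x + L, t) = u1 (x, t)"
    unfolding u1_def using periodic_Dx[OF smooth periodic] by blast
  have p2: "\<And>x t. t > 0 \<Longrightarrow> u2 (x + L, t) = u2 (x, t)"
    unfolding u2_def using periodic_Dx[OF s1 p1] by blast
  have p3: "\<And>x t. t > 0 \<Longrightarrow> u3 (x + L, t) = u3 (x, t)"
    unfolding u3_def using periodic_Dx[OF s2 p2] by blast
  define G where "G = (\<lambda>x. u (x, t))"
  define V where "V = (\<lambda>x. Dt u (x, t))"
  define V1 where "V1 = (\<lambda>x. Dt u1 (x, t))"
  define V2 where "V2 = (\<lambda>x. Dt u2 (x, t))"
  define V3 where "V3 = (\<lambda>x. Dt u3 (x, t))"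
  define W where "W = (\<lambda>x. Dt (Dx u3) (x, t))"
  have dG: "(G has_real_derivative u1 (x, t)) (at x)" for x
    unfolding G_def u1_def by (rule partial_x[OF smooth t])
  have dV: "(V has_real_derivative V1 x) (at x)" for x
    using partial_x[OF smooth_Dt[OF smooth] t, of x] schwarz[OF smooth t, of x]
    unfolding V_def V1_def u1_def by simp
  have dV1: "(V1 has_real_derivative V2 x) (at x)" for x
    using partial_x[OF smooth_Dt[OF s1] t, of x] schwarz[OF s1 t, of x]
    unfolding V1_def V2_def u2_def by simp
  have dV2: "(V2 has_real_derivative V3 x) (at x)" for x
    using partial_x[OF smooth_Dt[OF s2] t, of x] schwarz[OF s2 t, of x]
    unfolding V2_def V3_def u3_def by simp
  have dV3: "(V3 has_real_derivative W x) (at x)" for x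
    using partial_x[OF smooth_Dt[OF s3] t, of x] schwarz[OF s3 t, of x]
    unfolding V3_def W_def by simp
  have eq: "W x = - (V x + u1 (x, t) + G x * u1 (x, t))" for x
    using rosenau[OF t, of x] unfolding W_def V_def G_def u3_def u2_def u1_def by linarith
  define K where "K = (\<lambda>x. V3 x + G x + G x ^ 2 / 2)"
  define Psi where "Psi = (\<lambda>x. - (K x ^ 2) - 2 * V2 x * V x + V1 x ^ 2)"
  have dK: "(K has_real_derivative - V x) (at x)" for x
  proof -
    have "((\<lambda>x. V3 x + G x + G x ^ 2 / 2) has_real_derivative - V x) (at x)"
      by (rule DERIV_cong[OF DERIV_add[OF DERIV_add[OF dV3 dG] DERIV_cdivide[OF DERIV_power[OF dG]]]])
         (use eq[of x] in \<open>simp add: algebra_simps\<close>)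
    thus ?thesis unfolding K_def .
  qed
  have dPsi: "(Psi has_real_derivative (G x ^ 2 + 2 * G x) * V x) (at x)" for x
  proof -
    have "((\<lambda>x. - (K x ^ 2) - 2 * V2 x * V x + V1 x ^ 2) has_real_derivative (G x ^ 2 + 2 * G x) * V x) (at x)"
      by (rule DERIV_cong[OF DERIV_add[OF DERIV_diff[OF DERIV_minus[OF DERIV_power[OF dK]]
            DERIV_mult[OF DERIV_cmult[OF dV2] dV]] DERIV_power[OF dV1]]])
         (simp add: K_def algebra_simps power2_eq_square)
    thus ?thesis unfolding Psi_def .
  qed
  have "((\<lambda>x. (G x ^ 2 + 2 * G x) * V x) has_integral (Psi L - Psi 0)) {0..L}"
    by (rule fundamental_theorem_of_calculus) (use L_pos dPsi in \<open>auto simp: has_real_derivative_iff_has_vector_derivative[symmetric] intro: has_field_derivative_at_within\<close>)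
  moreover have "Psi L = Psi 0"
    using periodic[OF t, of 0] p1[OF t, of 0] p2[OF t, of 0] p3[OF t, of 0]
      periodic_Dt[OF smooth periodic t, of 0] periodic_Dt[OF s1 p1 t, of 0]
      periodic_Dt[OF s2 p2 t, of 0] periodic_Dt[OF s3 p3 t, of 0]
    unfolding Psi_def K_def V_def V1_def V2_def V3_def G_def by simp
  ultimately show ?thesis unfolding G_def V_def by (simp add: integral_unique)
qed

theorem mainTheorem4:
  fixes u :: "real \<times> real \<Rightarrow> real" and L :: real
  assumes L_pos: "L > 0"
    and smooth: "smooth_on2 (UNIV \<times> {0<..}) u"
    and periodic: "\<And>x t. t > 0 \<Longrightarrow> u (x + L, t) = u (x, t)"
    and rosenau: "\<And>x t. t > 0 \<Longrightarrow>
        Dt u (x, t) + Dt (Dx (Dx (Dx (Dx u)))) (x, t) + Dx u (x, t) + u (x, t) * Dx u (x, t) = 0"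
    and t1: "t1 > 0" and t2: "t2 > 0"
  shows "integral {0..L} (\<lambda>x. (1/3) * u (x, t1) ^ 3 + u (x, t1) ^ 2)
       = integral {0..L} (\<lambda>x. (1/3) * u (x, t2) ^ 3 + u (x, t2) ^ 2)"
proof -
  define Q where "Q = (\<lambda>t. integral (cbox 0 L) (\<lambda>x. (1/3) * u (x, t) ^ 3 + u (x, t) ^ 2))"
  have cu: "continuous_on SS u" by (rule smooth_cont[OF smooth])
  have cut: "continuous_on SS (Dt u)" by (rule smooth_cont[OF smooth_Dt[OF smooth]])
  have cf: "continuous_on SS (\<lambda>p. (1/3) * u p ^ 3 + u p ^ 2)"
    using cu by (intro continuous_intros)
  have cfx: "continuous_on SS (\<lambda>p. (u p ^ 2 + 2 * u p) * Dt u p)"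
    using cu cut by (intro continuous_intros)
  have dQ: "(Q has_real_derivative 0) (at t within {0<..})" if t: "t \<in> {0<..}" for t
  proof -
    have "(Q has_real_derivative integral (cbox 0 L) (\<lambda>x. (u (x, t) ^ 2 + 2 * u (x, t)) * Dt u (x, t))) (at t within {0<..})"
      unfolding Q_def
    proof (rule leibniz_rule_field_derivative[where fx="\<lambda>t' x. (u (x, t') ^ 2 + 2 * u (x, t')) * Dt u (x, t')"])
      fix t' :: real and x assume "t' \<in> {0<..}" "x \<in> cbox 0 L"
      hence "((\<lambda>s. u (x, s)) has_real_derivative Dt u (x, t')) (at t')"
        using partial_t[OF smooth] by simp
      note d = this
      have "((\<lambda>s. (1/3) * u (x, s) ^ 3 + u (x, s) ^ 2) has_real_derivative (u (x, t') ^ 2 + 2 * u (x, t')) * Dt u (x, t')) (at t')"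
        by (rule DERIV_cong[OF DERIV_add[OF DERIV_cmult[OF DERIV_power[OF d]] DERIV_power[OF d]]]) (simp add: algebra_simps power2_eq_square)
      thus "((\<lambda>s. (1/3) * u (x, s) ^ 3 + u (x, s) ^ 2) has_real_derivative (u (x, t') ^ 2 + 2 * u (x, t')) * Dt u (x, t')) (at t' within {0<..})"
        by (rule has_field_derivative_at_within)
    next
      fix t' :: real assume "t' \<in> {0<..}"
      hence "continuous_on {0..L} (\<lambda>x. (1/3) * u (x, t') ^ 3 + u (x, t') ^ 2)"
        using cont_slice_x[OF cf, of t'] by simp
      thus "(\<lambda>x. (1/3) * u (x, t') ^ 3 + u (x, t') ^ 2) integrable_on cbox 0 L"
        unfolding cbox_interval by (rule integrable_continuous_interval)
    next
      show "continuous_on ({0<..} \<times> cbox 0 L) (\<lambda>(t', x). (u (x, t') ^ 2 + 2 * u (x, t')) * Dt u (x, t'))"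
        using cont_swap[OF cfx] by simp
    next
      show "t \<in> {0<..}" using t .
    next
      show "convex ({0<..}::real set)" by (simp add: convex_real_interval)
    qed
    moreover have "integral (cbox 0 L) (\<lambda>x. (u (x, t) ^ 2 + 2 * u (x, t)) * Dt u (x, t)) = 0"
      using key[OF L_pos smooth periodic rosenau] t by (simp add: cbox_interval)
    ultimately show ?thesis by simp
  qed
  obtain c where "\<forall>t\<in>{0<..}. Q t = c"
    using has_field_derivative_zero_constant[OF _ dQ] by (auto simp: convex_real_interval)
  hence "Q t1 = Q t2" using t1 t2 by simp
  thus ?thesis unfolding Q_def by (simp add: cbox_interval)
qed

end
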